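(* Let $G=(S,R,\rho)$ be a $q$-grammar such that $R(s_{i+1})=q\uparrow R(s_i)$ for every $s_i\in\mathbb{S}$, let $\hat G=(S,R,\mathrm{KSO})$, and let $\phi$ be a master-linear evaluation. Then for every $f\in\mathbb{E}$, \[ \phi\big(\mathrm{Gen}^{(G)}_q(f;u)\big)=\phi\big(\mathrm{Gen}^{(\hat G)}_q(f;u)\big). \]
   Context: $\mathbb{K}$ is a commutative ring with unity and characteristic zero, $q$ an indeterminate. For a set $S$ of master variables, $\mathbb{S}=\{s_i:s\in S,\ i\ge0\}$ is a set of non-commuting variables, $F(\mathbb{S})$ the free group on $\mathbb{S}$, $\mathbb{E}=\mathbb{K}[q][F(\mathbb{S})]$ its group algebra. A rule $R$ assigns to each $s_i$ an element $R(s_i)\in\mathbb{E}$, extended by $R(s_i^{-1})=-s_i^{-1}R(s_i)s_{i+1}^{-1}$. The up-arrow $\uparrow$ is the $\mathbb{K}[q]$-linear map replacing each letter $s_i^{\pm1}$ of a word by $s_{i+1}^{\pm1}$. An order $\rho$ is a map rewriting each word by permuting its letters, extended linearly; KSO is the identity. The $q$-derivative of a $q$-grammar $(S,R,\rho)$ is the $\mathbb{K}[q]$-linear map with $D(w_1\cdots w_n)=\sum_{j=1}^n\rho\big(w_1\cdots w_{j-1}R(w_j)\uparrow(w_{j+1}\cdots w_n)\big)$ for letters $w_j$, $D^0=\mathrm{id}$, $D^k=D\circ D^{k-1}$. $\mathrm{Gen}^{(G)}_q(f;u)=\sum_{n\ge0}D^n(f)u^n/(q;q)_n$, $(q;q)_n=\prod_{i=1}^n(1-q^i)$.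 An evaluation is a map from $\mathbb{S}$ to a commutative ring containing $\mathbb{K}[q]$, extended to a $\mathbb{K}[q]$-linear ring morphism on $\mathbb{E}$ with $\phi(s_i^{-1})=\phi(s_i)^{-1}$ and applied coefficientwise; it is master-linear if $\phi(s_i)=\phi(s_j)$ for every $s\in S$ and all $i,j$. *)

theory Defs
  imports "HOL-Library.Multiset" "HOL-Computational_Algebra.Polynomial"
begin

text \<open>Letters of the free group F(S): (True,(s,i)) is s_i, (False,(s,i)) is s_i^{-1}.\<close>
type_synonym 's lett = "bool \<times> ('s \<times> nat)"
type_synonym 's word = "'s lett list"

text \<open>Elements of E = K[q][F(S)]: coefficient functions on reduced words with finite support.\<close>
type_synonym ('s, 'k) elt = "'s word \<Rightarrow> 'k poly"

definition inv_lett :: "'s lett \<Rightarrow> 's lett" where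
  "inv_lett l = (\<not> fst l, snd l)"

fun red :: "'s word \<Rightarrow> 's word" where
  "red [] = []"
| "red (x # xs) = (case red xs of [] \<Rightarrow> [x]
                    | y # ys \<Rightarrow> (if y = inv_lett x then ys else x # y # ys))"

definition reduced :: "'s word \<Rightarrow> bool" where
  "reduced w \<longleftrightarrow> red w = w"

definition supp :: "('s, 'k::zero) elt \<Rightarrow> 's word set" where
  "supp x = {w. x w \<noteq> 0}"

definition in_E :: "('s, 'k::zero) elt \<Rightarrow> bool" where
  "in_E x \<longleftrightarrow> finite (supp x) \<and> (\<forall>w\<in>supp x. reduced w)"

definition mono :: "'s word \<Rightarrow> ('s, 'k::comm_ring_1) elt" where
  "mono w = (\<lambda>v. if v = red w then 1 else 0)"

definition ext :: "('s word \<Rightarrow> ('s, 'k::comm_ring_1) elt) \<Rightarrow> ('s, 'k) elt \<Rightarrow> ('s, 'k) elt" where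
  "ext F x = (\<lambda>v. \<Sum>w\<in>supp x. x w * F w v)"

definition mul :: "('s, 'k::comm_ring_1) elt \<Rightarrow> ('s, 'k) elt \<Rightarrow> ('s, 'k) elt" where
  "mul x y = (\<lambda>v. \<Sum>p\<in>{(a, b). a \<in> supp x \<and> b \<in> supp y \<and> red (a @ b) = v}.
                    x (fst p) * y (snd p))"

definition smul :: "'k::comm_ring_1 poly \<Rightarrow> ('s, 'k) elt \<Rightarrow> ('s, 'k) elt" where
  "smul c x = (\<lambda>v. c * x v)"

definition up_l :: "'s lett \<Rightarrow> 's lett" where
  "up_l l = (fst l, (fst (snd l), Suc (snd (snd l))))"

definition upE :: "('s, 'k::comm_ring_1) elt \<Rightarrow> ('s, 'k) elt" where
  "upE x = ext (\<lambda>w. mono (map up_l w)) x"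

text \<open>Rule R (given on the positive letters s_i) extended to inverse letters:
  R(s_i^{-1}) = - s_i^{-1} R(s_i) s_{i+1}^{-1}.\<close>
definition Rl :: "('s \<times> nat \<Rightarrow> ('s, 'k::comm_ring_1) elt) \<Rightarrow> 's lett \<Rightarrow> ('s, 'k) elt" where
  "Rl R l = (if fst l then R (snd l)
             else (\<lambda>v. - mul (mul (mono [(False, snd l)]) (R (snd l)))
                           (mono [(False, (fst (snd l), Suc (snd (snd l))))]) v))"

definition rhoE :: "('s word \<Rightarrow> 's word) \<Rightarrow> ('s, 'k::comm_ring_1) elt \<Rightarrow> ('s, 'k) elt" where
  "rhoE \<rho> x = ext (\<lambda>w. mono (\<rho> w)) x"

definition is_order :: "('s word \<Rightarrow> 's word) \<Rightarrow> bool" where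
  "is_order \<rho> \<longleftrightarrow> (\<forall>w. reduced w \<longrightarrow> mset (\<rho> w) = mset w)"

definition KSO :: "'s word \<Rightarrow> 's word" where
  "KSO = id"

definition qD :: "('s \<times> nat \<Rightarrow> ('s, 'k::comm_ring_1) elt) \<Rightarrow> ('s word \<Rightarrow> 's word)
                 \<Rightarrow> ('s, 'k) elt \<Rightarrow> ('s, 'k) elt" where
  "qD R \<rho> x = ext (\<lambda>w. (\<lambda>v. \<Sum>j<length w.
        rhoE \<rho> (mul (mul (mono (take j w)) (Rl R (w ! j)))
                      (upE (mono (drop (Suc j) w)))) v)) x"

definition qpoch :: "nat \<Rightarrow> 'k::comm_ring_1 poly" where
  "qpoch n = (\<Prod>i\<in>{1..n}. 1 - monom 1 i)"

text \<open>Gen_q(f;u) = sum_n D^n(f) u^n/(q;q)_n, represented as the sequence of its terms: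
  the n-th entry (D^n f, (q;q)_n) stands for the term D^n(f) u^n / (q;q)_n.\<close>
definition Gen :: "('s \<times> nat \<Rightarrow> ('s, 'k::comm_ring_1) elt) \<Rightarrow> ('s word \<Rightarrow> 's word)
                 \<Rightarrow> ('s, 'k) elt \<Rightarrow> nat \<Rightarrow> ('s, 'k) elt \<times> 'k poly" where
  "Gen R \<rho> f n = ((qD R \<rho> ^^ n) f, qpoch n)"

text \<open>Evaluations: phi on S-variables with values in a commutative ring B containing K[q]
  via the ring embedding iota; phi(s_i) must be invertible.\<close>
definition is_evaluation :: "('k::comm_ring_1 poly \<Rightarrow> 'b::comm_ring_1) \<Rightarrow> ('s \<times> nat \<Rightarrow> 'b) \<Rightarrow> bool" where
  "is_evaluation \<iota> \<phi> \<longleftrightarrow> inj \<iota> \<and> \<iota> 1 = 1 \<and> (\<forall>a b. \<iota> (a + b) = \<iota> a + \<iota> b)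
      \<and> (\<forall>a b. \<iota> (a * b) = \<iota> a * \<iota> b) \<and> (\<forall>x. \<exists>y. \<phi> x * y = 1)"

definition master_linear :: "('s \<times> nat \<Rightarrow> 'b) \<Rightarrow> bool" where
  "master_linear \<phi> \<longleftrightarrow> (\<forall>s i j. \<phi> (s, i) = \<phi> (s, j))"

definition ev_lett :: "('s \<times> nat \<Rightarrow> 'b::comm_ring_1) \<Rightarrow> 's lett \<Rightarrow> 'b" where
  "ev_lett \<phi> l = (if fst l then \<phi> (snd l) else (THE y. \<phi> (snd l) * y = 1))"

definition evE :: "('k::comm_ring_1 poly \<Rightarrow> 'b::comm_ring_1) \<Rightarrow> ('s \<times> nat \<Rightarrow> 'b)
                   \<Rightarrow> ('s, 'k) elt \<Rightarrow> 'b" where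
  "evE \<iota> \<phi> x = (\<Sum>w\<in>supp x. \<iota> (x w) * prod_list (map (ev_lett \<phi>) w))"

definition evGen :: "('k::comm_ring_1 poly \<Rightarrow> 'b::comm_ring_1) \<Rightarrow> ('s \<times> nat \<Rightarrow> 'b)
     \<Rightarrow> (nat \<Rightarrow> ('s, 'k) elt \<times> 'k poly) \<Rightarrow> nat \<Rightarrow> 'b \<times> 'b" where
  "evGen \<iota> \<phi> g n = (evE \<iota> \<phi> (fst (g n)), \<iota> (snd (g n)))"

end

theory Submission
  imports Defs
begin


fun rc :: "'s lett \<Rightarrow> 's word \<Rightarrow> 's word" where
  "rc x [] = [x]"
| "rc x (y # ys) = (if y = inv_lett x then ys else x # y # ys)"

lemma red_Cons: "red (x # xs) = rc x (red xs)"
  by (cases "red xs") auto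

declare red.simps(2)[simp del] red_Cons[simp]

fun nc :: "'s word \<Rightarrow> bool" where
  "nc [] = True"
| "nc [x] = True"
| "nc (x # y # ys) = (y \<noteq> inv_lett x \<and> nc (y # ys))"

lemma nc_tl: "nc (y # ys) \<Longrightarrow> nc ys"
  by (cases ys) auto

lemma nc_rc: "nc v \<Longrightarrow> nc (rc x v)"
  by (induction v rule: nc.induct) (auto dest: nc_tl)

lemma nc_red: "nc (red w)"
  by (induction w) (auto simp: red_Cons intro: nc_rc)

lemma red_nc: "nc w \<Longrightarrow> red w = w"
  by (induction w rule: nc.induct) (auto simp: red_Cons)

lemma red_red[simp]: "red (red w) = red w"
  using red_nc[OF nc_red] .

lemma inv_inv[simp]: "inv_lett (inv_lett x) = x"
  by (simp add: inv_lett_def)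

lemma inv_neq[simp]: "inv_lett x \<noteq> x"
  by (cases x) (simp add: inv_lett_def)

lemma rc_rc_inv: "nc v \<Longrightarrow> rc x (rc (inv_lett x) v) = v"
  by (induction v rule: nc.induct) auto

lemma red_append: "red (a @ b) = foldr rc a (red b)"
  by (induction a) (auto simp: red_Cons)

lemma nc_foldr: "nc v \<Longrightarrow> nc (foldr rc a v)"
  by (induction a) (auto intro: nc_rc)

lemma foldr_red: "nc v \<Longrightarrow> foldr rc a v = foldr rc (red a) v"
proof (induction a)
  case Nil then show ?case by simp
next
  case (Cons x a)
  show ?case
  proof (cases "red a")
    case Nil
    then show ?thesis using Cons by (simp add: red_Cons)
  next
    case (Cons y ys)
    show ?thesis
    proof (cases "y = inv_lett x")
      case True
      have "foldr rc (x # a) v = rc x (rc y (foldr rc ys v))"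
        using Cons.IH[OF Cons.prems] Cons by simp
      also have "\<dots> = foldr rc ys v" using True rc_rc_inv[OF nc_foldr[OF Cons.prems], of x ys]
        by simp
      finally show ?thesis using Cons True by (simp add: red_Cons)
    next
      case False
      then show ?thesis using Cons.IH[OF Cons.prems] Cons by (simp add: red_Cons)
    qed
  qed
qed

lemma red_app1: "red (red a @ b) = red (a @ b)"
  by (simp add: red_append foldr_red[OF nc_red, symmetric])

lemma red_app2: "red (a @ red b) = red (a @ b)"
  by (simp add: red_append)

lemma red_mid: "red (a @ red z @ b) = red (a @ z @ b)"
  by (metis red_app1 red_app2)

lemma red_pair_inv: "red [x, inv_lett x] = []"
  by (simp add: red_Cons)

lemma up_inj: "up_l x = up_l y \<Longrightarrow> x = y"
  by (cases x; cases y) (auto simp: up_l_def)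

lemma up_inv: "up_l (inv_lett x) = inv_lett (up_l x)"
  by (simp add: up_l_def inv_lett_def)

lemma rc_up: "rc (up_l x) (map up_l v) = map up_l (rc x v)"
  by (cases v) (auto simp: up_inv[symmetric] dest: up_inj)

lemma red_up: "red (map up_l w) = map up_l (red w)"
  by (induction w) (auto simp: red_Cons rc_up)




definition piL :: "('k::comm_ring_1 poly \<times> 's word) list \<Rightarrow> ('s, 'k) elt" where
  "piL X = (\<lambda>v. sum_list (map (\<lambda>(c, u). if red u = v then c else 0) X))"

definition scaleL :: "'k::comm_ring_1 poly \<Rightarrow> ('k poly \<times> 's word) list \<Rightarrow> ('k poly \<times> 's word) list" where
  "scaleL k X = map (\<lambda>(c, u). (k * c, u)) X"

definition ctxL :: "'s word \<Rightarrow> 's word \<Rightarrow> ('k::comm_ring_1 poly \<times> 's word) list \<Rightarrow> ('k poly \<times> 's word) list" where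
  "ctxL a b X = map (\<lambda>(c, z). (c, a @ z @ b)) X"

definition upL :: "('k::comm_ring_1 poly \<times> 's word) list \<Rightarrow> ('k poly \<times> 's word) list" where
  "upL X = map (\<lambda>(c, u). (c, map up_l u)) X"

definition mulL :: "('k::comm_ring_1 poly \<times> 's word) list \<Rightarrow> ('k poly \<times> 's word) list \<Rightarrow> ('k poly \<times> 's word) list" where
  "mulL X Y = concat (map (\<lambda>(c, u). map (\<lambda>(d, w). (c * d, u @ w)) Y) X)"

definition toL :: "('s, 'k::comm_ring_1) elt \<Rightarrow> ('k poly \<times> 's word) list" where
  "toL x = map (\<lambda>w. (x w, w)) (SOME L. distinct L \<and> set L = supp x)"

lemma piL_Nil[simp]: "piL [] v = 0"
  by (simp add: piL_def)

lemma piL_Cons: "piL ((c, u) # X) v = (if red u = v then c else 0) + piL X v"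
  by (simp add: piL_def)

lemma piL_append[simp]: "piL (X @ Y) v = piL X v + piL Y v"
  by (simp add: piL_def)

lemma piL_concat: "piL (concat Xs) v = sum_list (map (\<lambda>X. piL X v) Xs)"
  by (induction Xs) auto

lemma piL_scale[simp]: "piL (scaleL k X) v = k * piL X v"
  by (induction X) (auto simp: scaleL_def piL_Cons algebra_simps)

lemma scaleL_append[simp]: "scaleL k (X @ Y) = scaleL k X @ scaleL k Y"
  by (simp add: scaleL_def)

lemma ctxL_append[simp]: "ctxL a b (X @ Y) = ctxL a b X @ ctxL a b Y"
  by (simp add: ctxL_def)

lemma upL_append[simp]: "upL (X @ Y) = upL X @ upL Y"
  by (simp add: upL_def)

lemma ctxL_Nil[simp]: "ctxL a b [] = []" by (simp add: ctxL_def)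

lemma ctxL_scale: "ctxL a b (scaleL k X) = scaleL k (ctxL a b X)"
  by (induction X) (auto simp: ctxL_def scaleL_def)

lemma ctxL_ctxL: "ctxL a b (ctxL a' b' X) = ctxL (a @ a') (b' @ b) X"
  by (induction X) (auto simp: ctxL_def)

lemma ctxL_id[simp]: "ctxL [] [] X = X"
  by (induction X) (auto simp: ctxL_def)

lemma scaleL_scaleL: "scaleL k (scaleL k' X) = scaleL (k * k') X"
  by (induction X) (auto simp: scaleL_def mult.assoc)

lemma scaleL_one[simp]: "scaleL 1 X = X"
  by (induction X) (auto simp: scaleL_def)

lemma upL_scale: "upL (scaleL k X) = scaleL k (upL X)"
  by (induction X) (auto simp: upL_def scaleL_def)

lemma upL_ctxL: "upL (ctxL a b X) = ctxL (map up_l a) (map up_l b) (upL X)"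
  by (induction X) (auto simp: upL_def ctxL_def)

lemma upL_concat: "upL (concat Xs) = concat (map upL Xs)"
  by (induction Xs) (auto simp: upL_def)

lemma scaleL_concat: "scaleL k (concat Xs) = concat (map (scaleL k) Xs)"
  by (induction Xs) (auto simp: scaleL_def)

lemma ctxL_concat: "ctxL a b (concat Xs) = concat (map (ctxL a b) Xs)"
  by (induction Xs) auto

lemma mulL_left1: "mulL [(1, a)] Y = ctxL a [] Y"
  by (induction Y) (auto simp: mulL_def ctxL_def)

lemma mulL_right1: "mulL X [(1, b)] = ctxL [] b X"
  by (induction X) (auto simp: mulL_def ctxL_def)

lemma piL_mulL: "piL (mulL X Y) v = sum_list (map (\<lambda>(c, u). sum_list (map (\<lambda>(d, w). if red (u @ w) = v then c * d else 0) Y)) X)"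
proof (induction X)
  case Nil then show ?case by (simp add: mulL_def)
next
  case (Cons x X)
  obtain c u where x: "x = (c, u)" by (cases x)
  have "piL (map (\<lambda>(d, w). (c * d, u @ w)) Y) v
     = sum_list (map (\<lambda>(d, w). if red (u @ w) = v then c * d else 0) Y)"
    by (induction Y) (auto simp: piL_Cons)
  then show ?case using Cons by (simp add: mulL_def x)
qed

lemma supp_piL: "supp (piL X) \<subseteq> red ` snd ` set X"
proof
  fix a assume "a \<in> supp (piL X)"
  then have "piL X a \<noteq> 0" by (simp add: supp_def)
  then show "a \<in> red ` snd ` set X"
  proof (induction X)
    case Nil then show ?case by simp
  next
    case (Cons x X) then show ?case by (cases x) (auto simp: piL_Cons split: if_splits)
  qed
qed

lemma finite_supp_piL: "finite (supp (piL X))"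
  by (rule finite_subset[OF supp_piL]) simp

lemma in_E_piL: "in_E (piL X)"
  using supp_piL[of X] by (auto simp: in_E_def finite_supp_piL reduced_def)

lemma L0:
  fixes h :: "'k::comm_ring_1 poly \<Rightarrow> 'c::comm_ring_1"
  assumes "finite A" "red ` snd ` set X \<subseteq> A" "\<forall>a b. h (a + b) = h a + h b"
  shows "(\<Sum>a\<in>A. h (piL X a) * g a) = sum_list (map (\<lambda>(c, u). h c * g (red u)) X)"
  using assms(2)
proof (induction X)
  case Nil
  have "h 0 = 0" using assms(3)[rule_format, of 0 0] by simp
  then show ?case by simp
next
  case (Cons x X)
  obtain c u where x: "x = (c, u)" by (cases x)
  have h0: "h 0 = 0" using assms(3)[rule_format, of 0 0] by simp
  have e: "h (piL (x # X) a) * g a = (if red u = a then h c * g a else 0) + h (piL X a) * g a" for a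
    by (simp add: x piL_Cons assms(3) h0 distrib_right)
  have "(\<Sum>a\<in>A. h (piL (x # X) a) * g a)
      = (\<Sum>a\<in>A. (if red u = a then h c * g a else 0)) + (\<Sum>a\<in>A. h (piL X a) * g a)"
    by (simp only: e sum.distrib)
  also have "(\<Sum>a\<in>A. (if red u = a then h c * g a else 0)) = h c * g (red u)"
    using Cons.prems x assms(1) by (simp add: sum.delta)
  finally show ?case using Cons x by simp
qed

lemma L1:
  fixes h :: "'k::comm_ring_1 poly \<Rightarrow> 'c::comm_ring_1"
  assumes "\<forall>a b. h (a + b) = h a + h b"
  shows "(\<Sum>a\<in>supp (piL X). h (piL X a) * g a) = sum_list (map (\<lambda>(c, u). h c * g (red u)) X)"
proof -
  have h0: "h 0 = 0" using assms[rule_format, of 0 0] by simp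
  have "(\<Sum>a\<in>supp (piL X). h (piL X a) * g a) = (\<Sum>a\<in>red ` snd ` set X. h (piL X a) * g a)"
    by (rule sum.mono_neutral_left) (use supp_piL[of X] in \<open>auto simp: h0 supp_def\<close>)
  also have "\<dots> = sum_list (map (\<lambda>(c, u). h c * g (red u)) X)"
    by (rule L0) (auto simp: assms)
  finally show ?thesis .
qed

lemma L1id: "(\<Sum>a\<in>supp (piL X). piL X a * g a) = sum_list (map (\<lambda>(c, u). c * g (red u)) X)"
  using L1[of "\<lambda>x. x" X g] by simp

lemma piL_toL: assumes "in_E x" shows "piL (toL x) = x"
proof
  fix v
  have fin: "finite (supp x)" using assms by (simp add: in_E_def)
  obtain L where L: "distinct L \<and> set L = supp x"
    using finite_distinct_list[OF fin] by blast
  define L' where "L' = (SOME L. distinct L \<and> set L = supp x)"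
  have L': "distinct L' \<and> set L' = supp x" unfolding L'_def by (rule someI[of _ L]) (rule L)
  have red_id: "\<And>w. w \<in> supp x \<Longrightarrow> red w = w" using assms by (auto simp: in_E_def reduced_def)
  have "piL (toL x) v = sum_list (map (\<lambda>w. if red w = v then x w else 0) L')"
    by (simp add: toL_def L'_def[symmetric] piL_def o_def)
  also have "\<dots> = (\<Sum>w\<in>supp x. if red w = v then x w else 0)"
    using L' by (simp add: sum_list_distinct_conv_sum_set)
  also have "\<dots> = (\<Sum>w\<in>supp x. if w = v then x w else 0)"
    by (rule sum.cong) (auto simp: red_id)
  also have "\<dots> = x v"
    using assms by (auto simp: in_E_def supp_def sum.delta')
  finally show "piL (toL x) v = x v" .
qed

lemma mono_piL: "mono w = piL [(1, w)]"
  by (auto simp: mono_def piL_def)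

lemma ext_piL: "ext F (piL X) = (\<lambda>v. sum_list (map (\<lambda>(c, u). c * F (red u) v) X))"
  unfolding ext_def by (rule ext, rule L1id)

lemma aux_sl: fixes c :: "'a::comm_ring_1" shows "c * sum_list (map (\<lambda>(d, w). d * (if P w then 1 else 0)) Y) = sum_list (map (\<lambda>(d, w). if P w then c * d else 0) Y)"
  by (induction Y) (auto simp: algebra_simps)

lemma mul_piL: "mul (piL X) (piL Y) = piL (mulL X Y)"
proof
  fix v
  let ?x = "piL X" and ?y = "piL Y"
  have fx: "finite (supp ?x)" "finite (supp ?y)" by (auto simp: finite_supp_piL)
  have "mul ?x ?y v = (\<Sum>p\<in>{p \<in> supp ?x \<times> supp ?y. red (fst p @ snd p) = v}. ?x (fst p) * ?y (snd p))"
    unfolding mul_def by (rule sum.cong) auto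
  also have "\<dots> = (\<Sum>p\<in>supp ?x \<times> supp ?y. if red (fst p @ snd p) = v then ?x (fst p) * ?y (snd p) else 0)"
    using fx by (simp add: sum.inter_filter)
  also have "\<dots> = (\<Sum>a\<in>supp ?x. \<Sum>b\<in>supp ?y. if red (a @ b) = v then ?x a * ?y b else 0)"
    by (simp add: sum.cartesian_product case_prod_beta)
  also have "\<dots> = (\<Sum>a\<in>supp ?x. ?x a * (\<Sum>b\<in>supp ?y. ?y b * (if red (a @ b) = v then 1 else 0)))"
    by (simp add: sum_distrib_left algebra_simps if_distrib cong: if_cong)
  also have "\<dots> = (\<Sum>a\<in>supp ?x. ?x a * sum_list (map (\<lambda>(d, w). d * (if red (a @ red w) = v then 1 else 0)) Y))"
    by (simp add: L1id)
  also have "\<dots> = sum_list (map (\<lambda>(c, u). c * sum_list (map (\<lambda>(d, w). d * (if red (red u @ red w) = v then 1 else 0)) Y)) X)"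
    by (simp add: L1id)
  also have "\<dots> = piL (mulL X Y) v"
    unfolding piL_mulL red_app1 red_app2 by (induction X) (auto simp: aux_sl)
  finally show "mul ?x ?y v = piL (mulL X Y) v" .
qed




definition RLw :: "('s \<times> nat \<Rightarrow> ('s, 'k::comm_ring_1) elt) \<Rightarrow> 's lett \<Rightarrow> ('k poly \<times> 's word) list" where
  "RLw R l = (if fst l then toL (R (snd l))
     else scaleL (-1) (ctxL [(False, snd l)] [(False, (fst (snd l), Suc (snd (snd l))))] (toL (R (snd l)))))"

definition LJ :: "('s \<times> nat \<Rightarrow> ('s, 'k::comm_ring_1) elt) \<Rightarrow> nat \<Rightarrow> 's word \<Rightarrow> ('k poly \<times> 's word) list" where
  "LJ R j w = ctxL (take j w) (map up_l (drop (Suc j) w)) (RLw R (w ! j))"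

definition DLw :: "('s \<times> nat \<Rightarrow> ('s, 'k::comm_ring_1) elt) \<Rightarrow> 's word \<Rightarrow> ('k poly \<times> 's word) list" where
  "DLw R w = concat (map (\<lambda>j. LJ R j w) [0..<length w])"

definition DL :: "('s \<times> nat \<Rightarrow> ('s, 'k::comm_ring_1) elt) \<Rightarrow> ('k poly \<times> 's word) list \<Rightarrow> ('k poly \<times> 's word) list" where
  "DL R X = concat (map (\<lambda>(c, u). scaleL c (DLw R u)) X)"

definition rhoL :: "('s word \<Rightarrow> 's word) \<Rightarrow> ('k::comm_ring_1 poly \<times> 's word) list \<Rightarrow> ('k poly \<times> 's word) list" where
  "rhoL \<rho> X = map (\<lambda>(c, u). (c, \<rho> (red u))) X"

definition DLr :: "('s \<times> nat \<Rightarrow> ('s, 'k::comm_ring_1) elt) \<Rightarrow> ('s word \<Rightarrow> 's word) \<Rightarrow> ('k poly \<times> 's word) list \<Rightarrow> ('k poly \<times> 's word) list" where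
  "DLr R \<rho> X = concat (map (\<lambda>(c, u). scaleL c (rhoL \<rho> (DLw R (red u)))) X)"

lemma upE_piL: "upE (piL X) = piL (upL X)"
proof
  fix v
  show "upE (piL X) v = piL (upL X) v"
    unfolding upE_def ext_piL
    by (induction X) (auto simp: upL_def piL_Cons mono_def red_up)
qed

lemma rhoE_piL: "rhoE \<rho> (piL X) = piL (rhoL \<rho> X)"
proof
  fix v
  show "rhoE \<rho> (piL X) v = piL (rhoL \<rho> X) v"
    unfolding rhoE_def ext_piL
    by (induction X) (auto simp: rhoL_def piL_Cons mono_def)
qed

lemma rhoL_concat: "rhoL \<rho> (concat Xs) = concat (map (rhoL \<rho>) Xs)"
  by (induction Xs) (auto simp: rhoL_def)

lemma rhoL_append[simp]: "rhoL \<rho> (X @ Y) = rhoL \<rho> X @ rhoL \<rho> Y"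
  by (simp add: rhoL_def)

lemma red_ctx: "red (a @ z @ b) = red (red a @ z @ red b)"
  by (metis append_assoc red_app1 red_app2)

lemma piL_ctx_formula: "piL (ctxL a b X) v = (\<Sum>y\<in>supp (piL X). piL X y * (if red (a @ y @ b) = v then 1 else 0))"
  unfolding L1id red_mid
  by (induction X) (auto simp: ctxL_def piL_Cons)

lemma piL_cong_ctx: "piL X = piL Y \<Longrightarrow> piL (ctxL a b X) = piL (ctxL a b Y)"
  by (rule ext) (simp add: piL_ctx_formula)

lemma piL_ctx_red: "red a = red a' \<Longrightarrow> red b = red b' \<Longrightarrow> piL (ctxL a b X) = piL (ctxL a' b' X)"
  by (rule ext) (simp add: piL_ctx_formula red_ctx[of a _ b] red_ctx[of a' _ b'])

lemma piL_cong_scale: "piL X = piL Y \<Longrightarrow> piL (scaleL k X) = piL (scaleL k Y)"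
  by (rule ext) simp

lemma piL_RLw: assumes "in_E (R (snd l))" shows "piL (RLw R l) = Rl R l"
proof (cases "fst l")
  case True
  then show ?thesis by (simp add: RLw_def Rl_def piL_toL assms)
next
  case False
  have "Rl R l = (\<lambda>v. - mul (mul (piL [(1, [(False, snd l)])]) (piL (toL (R (snd l)))))
                         (piL [(1, [(False, (fst (snd l), Suc (snd (snd l))))])]) v)"
    using False by (simp add: Rl_def mono_piL piL_toL assms)
  also have "\<dots> = piL (RLw R l)"
    using False by (intro ext) (simp add: mul_piL mulL_left1 mulL_right1 ctxL_ctxL RLw_def)
  finally show ?thesis by simp
qed

lemma T_piL: assumes "in_E (R (snd l))"
  shows "mul (mul (mono a) (Rl R l)) (upE (mono d)) = piL (ctxL a (map up_l d) (RLw R l))"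
  by (simp add: piL_RLw[of R l, OF assms, symmetric] mono_piL upE_piL mul_piL mulL_left1 mulL_right1
      ctxL_ctxL upL_def)

lemma sum_upt_lessThan: "sum_list (map f [0..<n]) = (\<Sum>j<n. f j)"
  by (simp add: interv_sum_list_conv_sum_set_nat atLeast0LessThan)

lemma piL_DLr: "piL (DLr R \<rho> X) v = sum_list (map (\<lambda>(c, u). c * piL (rhoL \<rho> (DLw R (red u))) v) X)"
  by (induction X) (auto simp: DLr_def)

lemma qD_piL: assumes "\<forall>x. in_E (R x)" shows "qD R \<rho> (piL X) = piL (DLr R \<rho> X)"
proof
  fix v
  have T: "rhoE \<rho> (mul (mul (mono (take j w)) (Rl R (w ! j))) (upE (mono (drop (Suc j) w))))
          = piL (rhoL \<rho> (LJ R j w))" for j w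
    by (simp add: T_piL assms rhoE_piL LJ_def)
  have W: "(\<Sum>j<length w. piL (rhoL \<rho> (LJ R j w)) v) = piL (rhoL \<rho> (DLw R w)) v" for w
    by (simp add: DLw_def rhoL_concat piL_concat sum_upt_lessThan o_def)
  show "qD R \<rho> (piL X) v = piL (DLr R \<rho> X) v"
    unfolding qD_def ext_piL piL_DLr T W ..
qed

lemma LJ_app1: "j < length u \<Longrightarrow> LJ R j (u @ w) = ctxL [] (map up_l w) (LJ R j u)"
  by (simp add: LJ_def ctxL_ctxL nth_append)

lemma LJ_app2: "LJ R (i + length u) (u @ w) = ctxL u [] (LJ R i w)"
  by (simp add: LJ_def ctxL_ctxL nth_append)

lemma DLw_app: "DLw R (u @ w) = ctxL [] (map up_l w) (DLw R u) @ ctxL u [] (DLw R w)"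
proof -
  have "[0..<length (u @ w)] = [0..<length u] @ map (\<lambda>i. i + length u) [0..<length w]"
    by (simp add: map_add_upt upt_add_eq_append[of 0 "length u" "length w", simplified] add.commute)
  then have "DLw R (u @ w) = concat (map (\<lambda>j. LJ R j (u @ w)) [0..<length u])
                           @ concat (map (\<lambda>i. LJ R (i + length u) (u @ w)) [0..<length w])"
    by (simp add: DLw_def o_def)
  also have "concat (map (\<lambda>j. LJ R j (u @ w)) [0..<length u]) = ctxL [] (map up_l w) (DLw R u)"
    unfolding DLw_def ctxL_concat map_map o_def
    by (rule arg_cong[where f=concat], rule map_cong) (simp_all add: LJ_app1)
  also have "concat (map (\<lambda>i. LJ R (i + length u) (u @ w)) [0..<length w]) = ctxL u [] (DLw R w)"
    by (simp add: DLw_def ctxL_concat o_def LJ_app2)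
  finally show ?thesis .
qed

lemma DLw_Cons: "DLw R (x # xs) = ctxL [] (map up_l xs) (DLw R [x]) @ ctxL [x] [] (DLw R xs)"
  using DLw_app[of R "[x]" xs] by simp

lemma DLw_pair: "DLw R [x, y] = ctxL [] [up_l y] (RLw R x) @ ctxL [x] [] (RLw R y)"
  by (simp add: DLw_def LJ_def upt_rec)

lemma DLw_cancel: "piL (DLw R [x, inv_lett x]) = piL []"
proof (rule ext)
  fix v
  obtain b s where x: "x = (b, s)" by (cases x)
  obtain s1 s2 where s: "s = (s1, s2)" by (cases s)
  let ?T = "toL (R s)"
  show "piL (DLw R [x, inv_lett x]) v = piL [] v"
  proof (cases b)
    case True
    have e: "piL (ctxL [x, inv_lett x] [(False, (s1, Suc s2))] ?T) = piL (ctxL [] [(False, (s1, Suc s2))] ?T)"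
      by (rule piL_ctx_red) (simp_all add: red_pair_inv)
    have "DLw R [x, inv_lett x] = ctxL [] [(False, (s1, Suc s2))] ?T
            @ scaleL (-1) (ctxL [x, inv_lett x] [(False, (s1, Suc s2))] ?T)"
      using True by (simp add: DLw_pair x s RLw_def inv_lett_def up_l_def ctxL_scale ctxL_ctxL)
    then show ?thesis using e by simp
  next
    case False
    have e: "piL (ctxL [x] [(False, (s1, Suc s2)), (True, (s1, Suc s2))] ?T) = piL (ctxL [x] [] ?T)"
      by (rule piL_ctx_red) (simp_all add: red_pair_inv[of "(False, (s1, Suc s2))", simplified inv_lett_def, simplified])
    have "DLw R [x, inv_lett x] = scaleL (-1) (ctxL [x] [(False, (s1, Suc s2)), (True, (s1, Suc s2))] ?T)
            @ ctxL [x] [] ?T"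
      using False by (simp add: DLw_pair x s RLw_def inv_lett_def up_l_def ctxL_scale ctxL_ctxL)
    then show ?thesis using e by simp
  qed
qed

lemma piL_cong_app: "piL X = piL X' \<Longrightarrow> piL Y = piL Y' \<Longrightarrow> piL (X @ Y) = piL (X' @ Y')"
  by (rule ext) simp




lemma key_red: "piL (DLw R (red u)) = piL (DLw R u)"
proof (induction u)
  case Nil then show ?case by simp
next
  case (Cons x xs)
  have A: "piL (DLw R (x # xs)) = piL (DLw R (x # red xs))"
    unfolding DLw_Cons[of R x xs] DLw_Cons[of R x "red xs"]
    apply (rule piL_cong_app)
     apply (rule piL_ctx_red) apply (rule refl) apply (simp only: red_up red_red)
    apply (rule piL_cong_ctx) apply (rule Cons.IH[symmetric])
    done
  show ?case
  proof (cases "red xs")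
    case Nil
    then have "red (x # xs) = x # red xs" by simp
    then show ?thesis using A by simp
  next
    case (Cons y ys)
    show ?thesis
    proof (cases "y = inv_lett x")
      case True
      have r: "red (x # xs) = ys" using Cons True by simp
      have "piL (DLw R (x # red xs)) = piL (DLw R ([x, inv_lett x] @ ys))"
        using Cons True by simp
      also have "\<dots> = piL (ctxL [] (map up_l ys) (DLw R [x, inv_lett x]) @ ctxL [x, inv_lett x] [] (DLw R ys))"
        by (simp only: DLw_app)
      also have "\<dots> = piL (ctxL [] (map up_l ys) [] @ ctxL [] [] (DLw R ys))"
        apply (rule piL_cong_app)
         apply (rule piL_cong_ctx) apply (rule DLw_cancel)
        apply (rule piL_ctx_red) apply (simp only: red_pair_inv red.simps(1)) apply (rule refl)
        done
      also have "\<dots> = piL (DLw R ys)" by simp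
      finally show ?thesis using A r by simp
    next
      case False
      then have "red (x # xs) = x # red xs" using Cons by simp
      then show ?thesis using A by simp
    qed
  qed
qed




lemma scaleL_Cons[simp]: "scaleL k ((c, u) # X) = (k * c, u) # scaleL k X"
  by (simp add: scaleL_def)
lemma scaleL_Nil[simp]: "scaleL k [] = []"
  by (simp add: scaleL_def)
lemma DL_Cons[simp]: "DL R ((c, u) # X) = scaleL c (DLw R u) @ DL R X"
  by (simp add: DL_def)
lemma DL_Nil[simp]: "DL R [] = []"
  by (simp add: DL_def)
lemma DL_append[simp]: "DL R (X @ Y) = DL R X @ DL R Y"
  by (simp add: DL_def)
lemma DL_scale: "DL R (scaleL k X) = scaleL k (DL R X)"
proof (induction X)
  case Nil then show ?case by simp
next
  case (Cons x X) then show ?case by (cases x) (simp add: scaleL_scaleL)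
qed
lemma DLpow_append: "(DL R ^^ m) (X @ Y) = (DL R ^^ m) X @ (DL R ^^ m) Y"
  by (induction m) auto
lemma DLpow_scale: "(DL R ^^ m) (scaleL k X) = scaleL k ((DL R ^^ m) X)"
  by (induction m) (auto simp: DL_scale)

lemma piL_DL: "piL (DL R X) v = sum_list (map (\<lambda>(c, u). c * piL (DLw R u) v) X)"
  by (induction X) auto

section \<open>Up commutation\<close>

lemma RLw_up:
  assumes hR: "\<forall>x. in_E (R x)"
    and hup: "\<forall>s i. R (s, Suc i) = smul (monom 1 1) (upE (R (s, i)))"
  shows "piL (RLw R (up_l l)) = piL (scaleL (monom 1 1) (upL (RLw R l)))"
proof -
  obtain b s i where l: "l = (b, (s, i))" by (cases l) auto
  let ?T = "toL (R (s, i))"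
  let ?q = "monom 1 1"
  have e2: "upE (R (s, i)) = piL (upL ?T)"
    using upE_piL[of ?T] piL_toL[of "R (s, i)"] hR by simp
  have base: "piL (toL (R (s, Suc i))) = piL (scaleL ?q (upL ?T))"
  proof -
    have "piL (toL (R (s, Suc i))) = R (s, Suc i)" using hR piL_toL by blast
    also have "\<dots> = smul ?q (piL (upL ?T))" using hup e2 by simp
    also have "\<dots> = piL (scaleL ?q (upL ?T))" by (rule ext) (simp add: smul_def)
    finally show ?thesis .
  qed
  show ?thesis
  proof (cases b)
    case True
    then show ?thesis using base by (simp add: l RLw_def up_l_def)
  next
    case False
    have "piL (RLw R (up_l l)) = piL (scaleL (-1) (ctxL [(False, (s, Suc i))] [(False, (s, Suc (Suc i)))] (toL (R (s, Suc i)))))"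
      using False by (simp add: l RLw_def up_l_def)
    also have "\<dots> = piL (scaleL (-1) (ctxL [(False, (s, Suc i))] [(False, (s, Suc (Suc i)))] (scaleL ?q (upL ?T))))"
      by (rule piL_cong_scale, rule piL_cong_ctx, rule base)
    also have "\<dots> = piL (scaleL ?q (upL (RLw R l)))"
      using False by (intro ext) (simp add: l RLw_def up_l_def upL_scale upL_ctxL ctxL_scale)
    finally show ?thesis .
  qed
qed

lemma DLw_up:
  assumes hR: "\<forall>x. in_E (R x)"
    and hup: "\<forall>s i. R (s, Suc i) = smul (monom 1 1) (upE (R (s, i)))"
  shows "piL (DLw R (map up_l w)) = piL (scaleL (monom 1 1) (upL (DLw R w)))"
proof
  fix v
  have LJ: "piL (LJ R j (map up_l w)) = piL (scaleL (monom 1 1) (upL (LJ R j w)))" if "j < length w" for j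
  proof -
    have "LJ R j (map up_l w) = ctxL (map up_l (take j w)) (map up_l (map up_l (drop (Suc j) w))) (RLw R (up_l (w ! j)))"
      using that by (simp add: LJ_def take_map drop_map)
    moreover have "upL (LJ R j w) = ctxL (map up_l (take j w)) (map up_l (map up_l (drop (Suc j) w))) (upL (RLw R (w ! j)))"
      by (simp add: LJ_def upL_ctxL)
    ultimately show ?thesis
      using piL_cong_ctx[OF RLw_up[OF hR hup, of "w ! j"]] by (simp add: ctxL_scale)
  qed
  have "piL (DLw R (map up_l w)) v = (\<Sum>j<length w. piL (LJ R j (map up_l w)) v)"
    by (simp add: DLw_def piL_concat sum_upt_lessThan o_def)
  also have "\<dots> = (\<Sum>j<length w. monom 1 1 * piL (upL (LJ R j w)) v)"
    by (rule sum.cong) (auto simp: LJ)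
  also have "\<dots> = piL (scaleL (monom 1 1) (upL (DLw R w))) v"
    by (simp add: DLw_def piL_concat sum_upt_lessThan o_def upL_concat sum_distrib_left)
  finally show "piL (DLw R (map up_l w)) v = piL (scaleL (monom 1 1) (upL (DLw R w))) v" .
qed

section \<open>Evaluation\<close>

definition evw :: "('s \<times> nat \<Rightarrow> 'b::comm_ring_1) \<Rightarrow> 's word \<Rightarrow> 'b" where
  "evw \<phi> u = prod_list (map (ev_lett \<phi>) u)"

definition evL :: "('k::comm_ring_1 poly \<Rightarrow> 'b::comm_ring_1) \<Rightarrow> ('s \<times> nat \<Rightarrow> 'b) \<Rightarrow> ('k poly \<times> 's word) list \<Rightarrow> 'b" where
  "evL \<iota> \<phi> X = sum_list (map (\<lambda>(c, u). \<iota> c * evw \<phi> u) X)"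

definition Psi where "Psi R \<iota> \<phi> X m = evL \<iota> \<phi> ((DL R ^^ m) X)"
definition Phi where "Phi R \<iota> \<phi> m u = Psi R \<iota> \<phi> [(1, u)] m"

lemma evw_append[simp]: "evw \<phi> (u @ w) = evw \<phi> u * evw \<phi> w"
  by (simp add: evw_def)
lemma evw_Nil[simp]: "evw \<phi> [] = 1"
  by (simp add: evw_def)
lemma evw_Cons[simp]: "evw \<phi> (x # u) = ev_lett \<phi> x * evw \<phi> u"
  by (simp add: evw_def)

lemma evL_Nil[simp]: "evL \<iota> \<phi> [] = 0" by (simp add: evL_def)
lemma evL_append[simp]: "evL \<iota> \<phi> (X @ Y) = evL \<iota> \<phi> X + evL \<iota> \<phi> Y" by (simp add: evL_def)
lemma evL_Cons[simp]: "evL \<iota> \<phi> ((c, u) # X) = \<iota> c * evw \<phi> u + evL \<iota> \<phi> X" by (simp add: evL_def)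




lemma ev_lett_inv:
  assumes "is_evaluation \<iota> \<phi>"
  shows "ev_lett \<phi> x * ev_lett \<phi> (inv_lett x) = 1"
proof -
  obtain b s where x: "x = (b, s)" by (cases x)
  have ex: "\<exists>!y. \<phi> s * y = 1"
  proof -
    have "\<exists>y. \<phi> s * y = 1" using assms unfolding is_evaluation_def by blast
    then obtain y where y: "\<phi> s * y = 1" by blast
    have "y' = y" if "\<phi> s * y' = 1" for y'
    proof -
      have "y' = y' * (\<phi> s * y)" using y by simp
      also have "\<dots> = (\<phi> s * y') * y" by (simp add: ac_simps)
      finally show ?thesis using that by simp
    qed
    then show ?thesis using y by blast
  qed
  have t: "\<phi> s * (THE y. \<phi> s * y = 1) = 1" using theI'[OF ex] .
  show ?thesis using t by (cases b) (auto simp: x ev_lett_def inv_lett_def mult.commute)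
qed

lemma evw_rc: assumes "is_evaluation \<iota> \<phi>" shows "evw \<phi> (rc x v) = ev_lett \<phi> x * evw \<phi> v"
proof (cases v)
  case Nil then show ?thesis by simp
next
  case (Cons y ys)
  show ?thesis
  proof (cases "y = inv_lett x")
    case True
    have "ev_lett \<phi> x * evw \<phi> v = (ev_lett \<phi> x * ev_lett \<phi> (inv_lett x)) * evw \<phi> ys"
      using Cons True by (simp add: mult.assoc)
    then show ?thesis using Cons True ev_lett_inv[OF assms] by simp
  next
    case False then show ?thesis using Cons by simp
  qed
qed

lemma evw_red: assumes "is_evaluation \<iota> \<phi>" shows "evw \<phi> (red u) = evw \<phi> u"
  by (induction u) (simp_all add: evw_rc[OF assms])

lemma evw_up: assumes "master_linear \<phi>" shows "evw \<phi> (map up_l u) = evw \<phi> u"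
proof -
  have "ev_lett \<phi> (up_l l) = ev_lett \<phi> l" for l
  proof -
    obtain a b c where l: "l = (a, (b, c))" by (cases l) auto
    have e: "\<phi> (b, Suc c) = \<phi> (b, c)" using assms unfolding master_linear_def by blast
    show ?thesis by (simp add: l ev_lett_def up_l_def e)
  qed
  then show ?thesis by (induction u) auto
qed

lemma iota_add: "is_evaluation \<iota> \<phi> \<Longrightarrow> \<iota> (a + b) = \<iota> a + \<iota> b"
  by (simp add: is_evaluation_def)
lemma iota_mult: "is_evaluation \<iota> \<phi> \<Longrightarrow> \<iota> (a * b) = \<iota> a * \<iota> b"
  by (simp add: is_evaluation_def)
lemma iota_one: "is_evaluation \<iota> \<phi> \<Longrightarrow> \<iota> 1 = 1"
  by (simp add: is_evaluation_def)

lemma evE_piL: assumes "is_evaluation \<iota> \<phi>" shows "evE \<iota> \<phi> (piL X) = evL \<iota> \<phi> X"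
proof -
  have "evE \<iota> \<phi> (piL X) = (\<Sum>a\<in>supp (piL X). \<iota> (piL X a) * evw \<phi> a)"
    by (simp add: evE_def evw_def)
  also have "\<dots> = sum_list (map (\<lambda>(c, u). \<iota> c * evw \<phi> (red u)) X)"
    by (rule L1) (simp add: iota_add[OF assms])
  also have "\<dots> = evL \<iota> \<phi> X"
    by (simp add: evL_def evw_red[OF assms])
  finally show ?thesis .
qed

lemma evL_scale: assumes "is_evaluation \<iota> \<phi>" shows "evL \<iota> \<phi> (scaleL k X) = \<iota> k * evL \<iota> \<phi> X"
  by (induction X) (auto simp: iota_mult[OF assms] algebra_simps)

lemma piL_DL_qD: assumes hR: "\<forall>x. in_E (R x)" shows "piL (DL R X) = qD R KSO (piL X)"
proof
  fix v
  have Z: "piL (rhoL KSO Z) = piL Z" for Z :: "('k::comm_ring_1 poly \<times> 's word) list"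
    by (rule ext) (induction Z, auto simp: rhoL_def KSO_def piL_Cons)
  show "piL (DL R X) v = qD R KSO (piL X) v"
    by (simp add: qD_piL[OF hR] piL_DLr piL_DL key_red Z)
qed

lemma piL_DLpow: assumes hR: "\<forall>x. in_E (R x)" shows "piL ((DL R ^^ m) X) = (qD R KSO ^^ m) (piL X)"
  by (induction m) (simp_all add: piL_DL_qD[OF hR])

locale qg =
  fixes R :: "'s \<times> nat \<Rightarrow> ('s, 'k::comm_ring_1) elt"
    and \<iota> :: "'k poly \<Rightarrow> 'b::comm_ring_1"
    and \<phi> :: "'s \<times> nat \<Rightarrow> 'b"
  assumes hR: "\<forall>x. in_E (R x)"
    and hup: "\<forall>s i. R (s, Suc i) = smul (monom 1 1) (upE (R (s, i)))"
    and hev: "is_evaluation \<iota> \<phi>"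
    and hml: "master_linear \<phi>"
begin

abbreviation "Ps \<equiv> Psi R \<iota> \<phi>"
abbreviation "Ph \<equiv> Phi R \<iota> \<phi>"
abbreviation "Q \<equiv> \<iota> (monom 1 1)"

lemma Psi_piL: "piL X = piL Y \<Longrightarrow> Ps X m = Ps Y m"
  unfolding Psi_def evE_piL[OF hev, symmetric] piL_DLpow[OF hR] by simp

lemma Psi_append[simp]: "Ps (X @ Y) m = Ps X m + Ps Y m"
  by (simp add: Psi_def DLpow_append)

lemma Psi_scale[simp]: "Ps (scaleL k X) m = \<iota> k * Ps X m"
  by (simp add: Psi_def DLpow_scale evL_scale[OF hev])

lemma Psi_Nil[simp]: "Ps [] m = 0"
proof -
  have "(DL R ^^ m) [] = []" by (induction m) auto
  then show ?thesis by (simp add: Psi_def)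
qed

lemma Psi_Cons: "Ps ((c, u) # X) m = \<iota> c * Ph m u + Ps X m"
proof -
  have "(c, u) # X = scaleL c [(1, u)] @ X" by simp
  then show ?thesis by (simp only: Psi_append Psi_scale Phi_def)
qed

lemma Psi_lin: "Ps X m = sum_list (map (\<lambda>(c, u). \<iota> c * Ph m u) X)"
proof (induction X)
  case Nil then show ?case by simp
next
  case (Cons x X) then show ?case by (cases x) (simp add: Psi_Cons)
qed

lemma Psi_concat: "Ps (concat Xs) m = sum_list (map (\<lambda>X. Ps X m) Xs)"
  by (induction Xs) auto

lemma Phi_0: "Ph 0 u = evw \<phi> u"
  by (simp add: Phi_def Psi_def iota_one[OF hev])

lemma Phi_Suc: "Ph (Suc m) u = Ps (DLw R u) m"
  by (simp add: Phi_def Psi_def funpow_Suc_right del: funpow.simps)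

lemma Psi_ctx: "Ps (ctxL a b Z) m = sum_list (map (\<lambda>(c, z). \<iota> c * Ph m (a @ z @ b)) Z)"
  by (simp add: Psi_lin ctxL_def split_def o_def)

lemma Phi_red: "Ph m (red u) = Ph m u"
  unfolding Phi_def by (rule Psi_piL) (rule ext, simp add: piL_Cons)

lemma Phi_up: "Ph m (map up_l w) = Q ^ m * Ph m w"
proof (induction m arbitrary: w)
  case 0 then show ?case by (simp add: Phi_0 evw_up[OF hml])
next
  case (Suc m)
  have "Ph (Suc m) (map up_l w) = Ps (scaleL (monom 1 1) (upL (DLw R w))) m"
    unfolding Phi_Suc by (rule Psi_piL) (rule DLw_up[OF hR hup])
  also have "\<dots> = Q * Ps (upL (DLw R w)) m" by simp
  also have "Ps (upL Z) m = Q ^ m * Ps Z m" for Z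
    by (induction Z) (auto simp: Psi_lin upL_def Suc.IH algebra_simps)
  finally show ?case by (simp add: Phi_Suc)
qed


end




fun Gb :: "'b::comm_ring_1 \<Rightarrow> nat \<Rightarrow> nat \<Rightarrow> 'b" where
  "Gb Q 0 k = (if k = 0 then 1 else 0)"
| "Gb Q (Suc m) 0 = 1"
| "Gb Q (Suc m) (Suc k) = Q ^ (m - k) * Gb Q m k + Gb Q m (Suc k)"

lemma Gb_0[simp]: "Gb Q m 0 = 1"
  by (cases m) auto

lemma Gb_above: "m < k \<Longrightarrow> Gb Q m k = 0"
proof (induction m arbitrary: k)
  case 0 then show ?case by simp
next
  case (Suc m) then show ?case by (cases k) auto
qed

lemma Gb_diag: "Gb Q m m = 1"
  by (induction m) (auto simp: Gb_above)

lemma Gb_rec2: "Gb Q (Suc m) (Suc k) = Gb Q m k + Q ^ Suc k * Gb Q m (Suc k)"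
proof (induction m arbitrary: k)
  case 0 then show ?case by (cases k) auto
next
  case (Suc m)
  show ?case
  proof (cases k)
    case 0
    have h: "Q ^ m + Gb Q m (Suc 0) = 1 + Q * Gb Q m (Suc 0)"
      using Suc.IH[of 0] by simp
    have "Gb Q (Suc (Suc m)) (Suc 0) = Q * Q ^ m + (Q ^ m + Gb Q m (Suc 0))" by simp
    also have "\<dots> = Q * Q ^ m + (1 + Q * Gb Q m (Suc 0))" using h by simp
    also have "\<dots> = Gb Q (Suc m) 0 + Q ^ Suc 0 * Gb Q (Suc m) (Suc 0)" by (simp add: algebra_simps)
    finally show ?thesis by (simp add: 0)
  next
    case (Suc j)
    have i1: "Gb Q (Suc m) (Suc j) = Gb Q m j + Q ^ Suc j * Gb Q m (Suc j)" using Suc.IH[of j] .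
    have i2: "Gb Q (Suc m) (Suc (Suc j)) = Gb Q m (Suc j) + Q ^ Suc (Suc j) * Gb Q m (Suc (Suc j))"
      using Suc.IH[of "Suc j"] .
    have d1: "Gb Q (Suc m) (Suc j) = Q ^ (m - j) * Gb Q m j + Gb Q m (Suc j)" by simp
    have d2: "Gb Q (Suc m) (Suc (Suc j)) = Q ^ (m - Suc j) * Gb Q m (Suc j) + Gb Q m (Suc (Suc j))" by simp
    have ex: "Q ^ (m - j) * Q ^ Suc j * Gb Q m (Suc j) = Q ^ Suc (Suc j) * Q ^ (m - Suc j) * Gb Q m (Suc j)"
    proof (cases "j < m")
      case True
      then have "m - j + Suc j = Suc (Suc j) + (m - Suc j)" by simp
      then have "Q ^ (m - j) * Q ^ Suc j = Q ^ Suc (Suc j) * Q ^ (m - Suc j)"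
        by (metis power_add)
      then show ?thesis by simp
    next
      case False then show ?thesis by (simp add: Gb_above)
    qed
    have "Gb Q (Suc (Suc m)) (Suc k) = Q ^ (m - j) * Gb Q (Suc m) (Suc j) + Gb Q (Suc m) (Suc (Suc j))"
      by (simp add: Suc)
    also have "\<dots> = Q ^ (m - j) * Gb Q m j + Q ^ (m - j) * Q ^ Suc j * Gb Q m (Suc j)
                     + Gb Q m (Suc j) + Q ^ Suc (Suc j) * Gb Q m (Suc (Suc j))"
      unfolding i1 i2 by (simp add: algebra_simps)
    also have "\<dots> = Q ^ (m - j) * Gb Q m j + Gb Q m (Suc j)
                     + Q ^ Suc (Suc j) * (Q ^ (m - Suc j) * Gb Q m (Suc j) + Gb Q m (Suc (Suc j)))"
      using ex by (simp add: algebra_simps)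
    also have "\<dots> = Gb Q (Suc m) k + Q ^ Suc k * Gb Q (Suc m) (Suc k)"
      unfolding Suc d1 d2 ..
    finally show ?thesis .
  qed
qed

lemma Gb_sym: "k \<le> m \<Longrightarrow> Gb Q m (m - k) = Gb Q m k"
proof (induction m arbitrary: k)
  case 0 then show ?case by simp
next
  case (Suc m)
  note IH = Suc.IH and prem = Suc.prems
  show ?case
  proof (cases k)
    case 0 then show ?thesis by (simp add: Gb_diag)
  next
    case (Suc j)
    note kj = this
    show ?thesis
    proof (cases "j = m")
      case True then show ?thesis using kj by (simp add: Gb_diag)
    next
      case False
      then have jm: "j < m" using prem kj by simp
      define i where "i = m - Suc j"
      have i: "m - j = Suc i" using jm unfolding i_def by simp
      have A: "Gb Q (Suc m) (Suc m - k) = Gb Q m i + Q ^ Suc i * Gb Q m (Suc i)"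
        using kj i Gb_rec2[of Q m i] by simp
      have B: "Gb Q m i = Gb Q m (Suc j)" using IH[of "Suc j"] jm unfolding i_def by simp
      have C: "Gb Q m (Suc i) = Gb Q m j" using IH[of j] jm i by simp
      have D: "Gb Q (Suc m) k = Q ^ Suc i * Gb Q m j + Gb Q m (Suc j)" using kj i by simp
      show ?thesis unfolding A B C D by (simp add: algebra_simps)
    qed
  qed
qed

lemma conv_step:
  fixes a b :: "nat \<Rightarrow> 'b::comm_ring_1"
  shows "(\<Sum>k\<le>m. Gb Q m k * a (Suc k) * Q ^ (m - k) * b (m - k)) + (\<Sum>k\<le>m. Gb Q m k * a k * b (Suc (m - k)))
       = (\<Sum>k\<le>Suc m. Gb Q (Suc m) k * a k * b (Suc m - k))"
proof -
  have R: "(\<Sum>k\<le>Suc m. Gb Q (Suc m) k * a k * b (Suc m - k))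
      = a 0 * b (Suc m) + (\<Sum>k\<le>m. (Q ^ (m - k) * Gb Q m k + Gb Q m (Suc k)) * a (Suc k) * b (m - k))"
    by (subst sum.atMost_Suc_shift) (simp del: sum.atMost_Suc)
  have "(\<Sum>k\<le>m. Gb Q m k * a k * b (Suc (m - k))) = (\<Sum>k\<le>m. Gb Q m k * a k * b (Suc m - k))"
    by (rule sum.cong) (auto simp: Suc_diff_le)
  also have "\<dots> = (\<Sum>k\<le>Suc m. Gb Q m k * a k * b (Suc m - k))"
    by (simp add: Gb_above)
  also have "\<dots> = a 0 * b (Suc m) + (\<Sum>k\<le>m. Gb Q m (Suc k) * a (Suc k) * b (m - k))"
    by (subst sum.atMost_Suc_shift) (simp del: sum.atMost_Suc)
  finally have L2: "(\<Sum>k\<le>m. Gb Q m k * a k * b (Suc (m - k))) = a 0 * b (Suc m) + (\<Sum>k\<le>m. Gb Q m (Suc k) * a (Suc k) * b (m - k))" .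
  show ?thesis unfolding R L2
    by (simp add: algebra_simps sum.distrib)
qed

lemma conv_sym:
  fixes a b :: "nat \<Rightarrow> 'b::comm_ring_1"
  shows "(\<Sum>k\<le>m. Gb Q m k * a k * b (m - k)) = (\<Sum>k\<le>m. Gb Q m k * b k * a (m - k))"
proof -
  have "(\<Sum>k\<le>m. Gb Q m k * a k * b (m - k)) = (\<Sum>k<Suc m. Gb Q m k * a k * b (m - k))"
    by (simp add: lessThan_Suc_atMost)
  also have "\<dots> = (\<Sum>k<Suc m. Gb Q m (m - k) * a (m - k) * b (m - (m - k)))"
    using sum.nat_diff_reindex[of "\<lambda>k. Gb Q m k * a k * b (m - k)" "Suc m"] by simp
  also have "\<dots> = (\<Sum>k\<le>m. Gb Q m k * b k * a (m - k))"
    unfolding lessThan_Suc_atMost by (rule sum.cong) (auto simp: Gb_sym)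
  finally show ?thesis .
qed

lemma sl_swap:
  fixes h :: "'k \<Rightarrow> 'b::comm_ring_1"
  shows "sum_list (map (\<lambda>(c, z). h c * (\<Sum>k\<in>A. F k * G k z)) Z) = (\<Sum>k\<in>A. F k * sum_list (map (\<lambda>(c, z). h c * G k z) Z))"
  by (induction Z) (auto simp: sum.distrib sum_distrib_left algebra_simps)

lemma DLr_Cons[simp]: "DLr R \<rho> ((c, u) # Y) = scaleL c (rhoL \<rho> (DLw R (red u))) @ DLr R \<rho> Y"
  by (simp add: DLr_def)
lemma DLr_Nil[simp]: "DLr R \<rho> [] = []"
  by (simp add: DLr_def)




context qg begin

lemma Phi_app: "Ph m (u @ w) = (\<Sum>k\<le>m. Gb Q m k * Ph k u * Ph (m - k) w)"
proof (induction m arbitrary: u w)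
  case 0 then show ?case by (simp add: Phi_0)
next
  case (Suc m)
  have e0: "Ph (Suc m) (u @ w) = Ps (ctxL [] (map up_l w) (DLw R u)) m + Ps (ctxL u [] (DLw R w)) m"
    by (simp add: Phi_Suc DLw_app)
  have i1: "Ph m (z @ map up_l w) = (\<Sum>k\<le>m. (Gb Q m k * Ph (m - k) (map up_l w)) * Ph k z)" for z
    using Suc.IH[of z "map up_l w"] by (simp add: ac_simps)
  have i2: "Ph m (u @ z) = (\<Sum>k\<le>m. (Gb Q m k * Ph k u) * Ph (m - k) z)" for z
    using Suc.IH[of u z] by (simp add: ac_simps)
  have S1: "Ps (ctxL [] (map up_l w) (DLw R u)) m = (\<Sum>k\<le>m. Gb Q m k * Ph (Suc k) u * Q ^ (m - k) * Ph (m - k) w)"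
  proof -
    have "Ps (ctxL [] (map up_l w) (DLw R u)) m = sum_list (map (\<lambda>(c, z). \<iota> c * Ph m (z @ map up_l w)) (DLw R u))"
      unfolding Psi_ctx by simp
    also have "\<dots> = (\<Sum>k\<le>m. (Gb Q m k * Ph (m - k) (map up_l w)) * sum_list (map (\<lambda>(c, z). \<iota> c * Ph k z) (DLw R u)))"
      unfolding i1 by (rule sl_swap)
    also have "\<dots> = (\<Sum>k\<le>m. (Gb Q m k * Ph (m - k) (map up_l w)) * Ph (Suc k) u)"
      unfolding Phi_Suc Psi_lin ..
    finally show ?thesis by (simp add: Phi_up algebra_simps)
  qed
  have S2: "Ps (ctxL u [] (DLw R w)) m = (\<Sum>k\<le>m. Gb Q m k * Ph k u * Ph (Suc (m - k)) w)"
  proof -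
    have "Ps (ctxL u [] (DLw R w)) m = sum_list (map (\<lambda>(c, z). \<iota> c * Ph m (u @ z)) (DLw R w))"
      unfolding Psi_ctx by simp
    also have "\<dots> = (\<Sum>k\<le>m. (Gb Q m k * Ph k u) * sum_list (map (\<lambda>(c, z). \<iota> c * Ph (m - k) z) (DLw R w)))"
      unfolding i2 by (rule sl_swap)
    also have "\<dots> = (\<Sum>k\<le>m. (Gb Q m k * Ph k u) * Ph (Suc (m - k)) w)"
      unfolding Phi_Suc Psi_lin ..
    finally show ?thesis by simp
  qed
  show ?case unfolding e0 S1 S2 by (rule conv_step)
qed

lemma Phi_comm: "Ph m (u @ w) = Ph m (w @ u)"
  unfolding Phi_app by (rule conv_sym)

lemma Phi_perm: "mset u = mset u' \<Longrightarrow> Ph m u = Ph m u'"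
proof (induction u arbitrary: u' m)
  case Nil then show ?case by simp
next
  case (Cons a w)
  have "a \<in> set u'" using Cons.prems by (metis list.set_intros(1) set_mset_mset)
  then obtain p s where u': "u' = p @ a # s" by (meson split_list)
  have mw: "mset w = mset (p @ s)" using Cons.prems u' by simp
  have c1: "Ph j (a # s) = Ph j (s @ [a])" for j using Phi_comm[of j "[a]" s] by simp
  have "Ph m u' = (\<Sum>k\<le>m. Gb Q m k * Ph k p * Ph (m - k) (a # s))"
    unfolding u' by (rule Phi_app)
  also have "\<dots> = Ph m (p @ s @ [a])" by (simp add: c1 Phi_app)
  also have "\<dots> = Ph m ([a] @ (p @ s))" using Phi_comm[of m "p @ s" "[a]"] by simp
  also have "\<dots> = (\<Sum>k\<le>m. Gb Q m k * Ph k [a] * Ph (m - k) (p @ s))" by (rule Phi_app)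
  also have "\<dots> = (\<Sum>k\<le>m. Gb Q m k * Ph k [a] * Ph (m - k) w)" using Cons.IH[OF mw] by simp
  also have "\<dots> = Ph m (a # w)" using Phi_app[of m "[a]" w] by simp
  finally show ?case by simp
qed

lemma Psi_rhoL: assumes "is_order \<rho>" shows "Ps (rhoL \<rho> Z) m = Ps Z m"
proof -
  have "Ph m (\<rho> (red z)) = Ph m z" for z
  proof -
    have "mset (\<rho> (red z)) = mset (red z)" using assms by (simp add: is_order_def reduced_def)
    then show ?thesis using Phi_perm Phi_red by metis
  qed
  then show ?thesis by (induction Z) (auto simp: Psi_lin rhoL_def)
qed

lemma Psi_DLr: assumes "is_order \<rho>" shows "Ps (DLr R \<rho> Y) m = Ps Y (Suc m)"
proof (induction Y)
  case Nil then show ?case by simp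
next
  case (Cons x Y)
  obtain c u where x: "x = (c, u)" by (cases x)
  have "Ps (DLw R (red u)) m = Ps (DLw R u) m" by (rule Psi_piL) (rule key_red)
  then show ?case using Cons by (simp add: x Psi_rhoL[OF assms] Psi_Cons Phi_Suc)
qed

lemma iter: assumes "is_order \<rho>"
  shows "\<exists>Y. (qD R \<rho> ^^ n) (piL X) = piL Y \<and> (\<forall>m. Ps Y m = Ps X (n + m))"
proof (induction n)
  case 0 then show ?case by auto
next
  case (Suc n)
  then obtain Y where Y: "(qD R \<rho> ^^ n) (piL X) = piL Y" "\<forall>m. Ps Y m = Ps X (n + m)" by blast
  have "(qD R \<rho> ^^ Suc n) (piL X) = piL (DLr R \<rho> Y)" by (simp add: Y qD_piL[OF hR])
  moreover have "\<forall>m. Ps (DLr R \<rho> Y) m = Ps X (Suc n + m)"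
    using Y by (simp add: Psi_DLr[OF assms])
  ultimately show ?case by blast
qed

lemma evE_iter: assumes "is_order \<rho>" "in_E f"
  shows "evE \<iota> \<phi> ((qD R \<rho> ^^ n) f) = Ps (toL f) n"
proof -
  obtain Y where Y: "(qD R \<rho> ^^ n) (piL (toL f)) = piL Y" "\<forall>m. Ps Y m = Ps (toL f) (n + m)"
    using iter[OF assms(1)] by blast
  have "evE \<iota> \<phi> ((qD R \<rho> ^^ n) f) = evL \<iota> \<phi> Y"
    using Y(1) piL_toL[OF assms(2)] evE_piL[OF hev] by simp
  also have "\<dots> = Ps Y 0" by (simp add: Psi_def)
  also have "\<dots> = Ps (toL f) n" using Y(2) by simp
  finally show ?thesis .
qed

end

theorem proposition4p15:
  fixes R :: "'s \<times> nat \<Rightarrow> ('s, 'k::{comm_ring_1, ring_char_0}) elt"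
    and \<rho> :: "'s word \<Rightarrow> 's word"
    and \<iota> :: "'k poly \<Rightarrow> 'b::comm_ring_1"
    and \<phi> :: "'s \<times> nat \<Rightarrow> 'b"
    and f :: "('s, 'k) elt"
  assumes "\<forall>x. in_E (R x)"
    and "is_order \<rho>"
    and "\<forall>s i. R (s, Suc i) = smul (monom 1 1) (upE (R (s, i)))"
    and "is_evaluation \<iota> \<phi>"
    and "master_linear \<phi>"
    and "in_E f"
  shows "evGen \<iota> \<phi> (Gen R \<rho> f) = evGen \<iota> \<phi> (Gen R KSO f)"
proof
  fix n
  have KSO: "is_order KSO" by (simp add: is_order_def KSO_def)
  have Q: "qg R \<iota> \<phi>" by (rule qg.intro) (use assms in auto)
  have e1: "evE \<iota> \<phi> ((qD R \<rho> ^^ n) f) = Psi R \<iota> \<phi> (toL f) n"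
    using qg.evE_iter[OF Q assms(2) assms(6)] .
  have e2: "evE \<iota> \<phi> ((qD R KSO ^^ n) f) = Psi R \<iota> \<phi> (toL f) n"
    using qg.evE_iter[OF Q KSO assms(6)] .
  show "evGen \<iota> \<phi> (Gen R \<rho> f) n = evGen \<iota> \<phi> (Gen R KSO f) n"
    by (simp add: evGen_def Gen_def e1 e2)
qed


end
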